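(* Let $f:\mathbb{R}^p\to\mathbb{R}$ be of the form $f(x)=g(Hx)$ with $H\in\mathbb{R}^{m\times p}$ and $g:\mathbb{R}^m\to\mathbb{R}$ an $\alpha$-strongly convex ($\alpha>0$) and $L$-smooth function, and assume the set $X^*$ of minimizers of $f$ is nonempty. Let $c_H>0$ be a Hoffman coefficient of $H$, i.e. a constant with $\|Hx-H[x]\|^2\ge c_H\|x-[x]\|^2$ for all $x\in\mathbb{R}^p$, and let $C_H=1/\|H\|_2^2$. Then for all $x\in\mathbb{R}^p$, $$\langle\nabla f(x)-\nabla f([x]),\,x-[x]\rangle\ge\frac{L\alpha c_H}{L+\alpha}\|x-[x]\|^2+\frac{C_H}{L+\alpha}\|\nabla f(x)-\nabla f([x])\|^2.$$
   Context: $g$ is $L$-smooth if $\|\nabla g(u)-\nabla g(v)\|\le L\|u-v\|$, and $\alpha$-strongly convex if $g(v)\ge g(u)+\langle v-u,\nabla g(u)\rangle+\frac\alpha2\|v-u\|^2$ for all $u,v$. $f$ is convex, so $X^*$ is closed and convex and $[x]$ denotes the Euclidean projection of $x$ onto $X^*$. $\|H\|_2=\sup_{x\ne0}\|Hx\|/\|x\|$; norms are Euclidean. *)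

theory Defs
  imports "HOL-Analysis.Analysis"
begin

end

theory Submission imports Defs begin

lemma descent:
  fixes g :: "'a::real_inner \<Rightarrow> real"
  assumes gd: "\<And>u. (g has_derivative (\<lambda>h. G u \<bullet> h)) (at u)"
    and lip: "\<And>u v. norm (G u - G v) \<le> L * norm (u - v)"
  shows "g v \<le> g u + G u \<bullet> (v - u) + L / 2 * (norm (v - u))\<^sup>2"
proof -
  define d where "d = v - u"
  define k where "k t = g (u + t *\<^sub>R d) - t * (G u \<bullet> d) - L / 2 * t\<^sup>2 * (norm d)\<^sup>2" for t
  have gl: "((\<lambda>t. g (u + t *\<^sub>R d)) has_real_derivative (G (u + t *\<^sub>R d) \<bullet> d)) (at t)" for t
    unfolding has_field_derivative_def
  proof -
    have "((\<lambda>t. u + t *\<^sub>R d) has_derivative (\<lambda>h. h *\<^sub>R d)) (at t)"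
      by (auto intro!: derivative_eq_intros)
    from has_derivative_compose[OF this gd]
    show "((\<lambda>t. g (u + t *\<^sub>R d)) has_derivative (*) (G (u + t *\<^sub>R d) \<bullet> d)) (at t)"
      by (rule has_derivative_eq_rhs) (auto simp: fun_eq_iff)
  qed
  have kd: "(k has_real_derivative ((G (u + t *\<^sub>R d) - G u) \<bullet> d - L * t * (norm d)\<^sup>2)) (at t)" for t
    unfolding k_def[abs_def]
    by (rule derivative_eq_intros gl refl)+ (simp add: inner_diff_left algebra_simps)
  have "k 1 \<le> k 0"
  proof (rule DERIV_nonpos_imp_nonincreasing[of 0 1 k])
    fix t :: real assume t: "0 \<le> t" "t \<le> 1"
    have "(G (u + t *\<^sub>R d) - G u) \<bullet> d \<le> norm (G (u + t *\<^sub>R d) - G u) * norm d"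
      by (rule norm_cauchy_schwarz)
    also have "\<dots> \<le> (L * norm (t *\<^sub>R d)) * norm d"
      using lip[of "u + t *\<^sub>R d" u] by (intro mult_right_mono) auto
    also have "\<dots> = L * t * (norm d)\<^sup>2" using t by (simp add: power2_eq_square)
    finally have "(G (u + t *\<^sub>R d) - G u) \<bullet> d - L * t * (norm d)\<^sup>2 \<le> 0" by simp
    then show "\<exists>y. DERIV k t :> y \<and> y \<le> 0" using kd by blast
  qed simp
  then show ?thesis by (simp add: k_def d_def)
qed

lemma coco:
  fixes \<phi> :: "'a::real_inner \<Rightarrow> real"
  assumes C: "\<And>u v. \<phi> v \<ge> \<phi> u + G u \<bullet> (v - u)"
    and S: "\<And>u v. \<phi> v \<le> \<phi> u + G u \<bullet> (v - u) + M / 2 * (norm (v - u))\<^sup>2"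
    and M: "M \<ge> 0"
  shows "(norm (G y - G x))\<^sup>2 \<le> M * ((G y - G x) \<bullet> (y - x))"
proof -
  have half: "\<phi> y \<ge> \<phi> x + G x \<bullet> (y - x) + (norm (G y - G x))\<^sup>2 / (2 * M')"
    if M': "M' > 0" "M' \<ge> M" for M' x y
  proof -
    define D where "D = G y - G x"
    define w where "w = y - (1 / M') *\<^sub>R D"
    have "\<phi> w \<le> \<phi> y + G y \<bullet> (w - y) + M / 2 * (norm (w - y))\<^sup>2" by (rule S)
    also have "\<dots> \<le> \<phi> y + G y \<bullet> (w - y) + M' / 2 * (norm (w - y))\<^sup>2"
      using M' by (intro add_left_mono mult_right_mono) auto
    also have "\<dots> = \<phi> y - (G y \<bullet> D) / M' + (norm D)\<^sup>2 / (2 * M')"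
      using M' by (simp add: w_def power2_eq_square field_simps)
    finally have 1: "\<phi> w \<le> \<phi> y - (G y \<bullet> D) / M' + (norm D)\<^sup>2 / (2 * M')" .
    have 2: "\<phi> w \<ge> \<phi> x + G x \<bullet> (y - x) - (G x \<bullet> D) / M'"
      using C[of x w] by (simp add: w_def inner_diff_right algebra_simps)
    have 3: "(G y \<bullet> D) / M' - (G x \<bullet> D) / M' = (norm D)\<^sup>2 / M'"
      by (simp add: D_def power2_norm_eq_inner inner_diff_left diff_divide_distrib)
    have "(norm D)\<^sup>2 / M' = 2 * ((norm D)\<^sup>2 / (2 * M'))" by simp
    show ?thesis using 1 2 3 unfolding D_def[symmetric] by linarith
  qed
  have K: "(norm (G y - G x))\<^sup>2 \<le> M' * ((G y - G x) \<bullet> (y - x))"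
    if M': "M' > 0" "M' \<ge> M" for M'
  proof -
    have a: "\<phi> y \<ge> \<phi> x + G x \<bullet> (y - x) + (norm (G y - G x))\<^sup>2 / (2 * M')" by (rule half[OF M'])
    have b: "\<phi> x \<ge> \<phi> y + G y \<bullet> (x - y) + (norm (G x - G y))\<^sup>2 / (2 * M')" by (rule half[OF M'])
    have n: "norm (G x - G y) = norm (G y - G x)" by (rule norm_minus_commute)
    have i: "G x \<bullet> (y - x) + G y \<bullet> (x - y) = - ((G y - G x) \<bullet> (y - x))"
      by (simp add: inner_diff_left inner_diff_right inner_commute)
    have "(norm (G y - G x))\<^sup>2 / M' \<le> (G y - G x) \<bullet> (y - x)"
      using a b n i by (simp add: field_simps)
    then show ?thesis using M' by (simp add: field_simps)
  qed
  show ?thesis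
  proof (cases "M > 0")
    case True then show ?thesis using K by auto
  next
    case False
    then have M0: "M = 0" using M by auto
    define s where "s = (G y - G x) \<bullet> (y - x)"
    define n where "n = (norm (G y - G x))\<^sup>2"
    have Ke: "n \<le> e * s" if "e > 0" for e using K[of e] that M0 by (simp add: n_def s_def)
    have "n \<le> 0"
    proof (cases "s \<le> 0")
      case True then show ?thesis using Ke[of 1] by simp
    next
      case False
      show ?thesis
      proof (rule ccontr)
        assume "\<not> n \<le> 0"
        then have "n > 0" by simp
        then have "n \<le> (n / (2 * s)) * s" using Ke[of "n / (2 * s)"] False by simp
        also have "\<dots> = n / 2" using False by simp
        finally show False using \<open>n > 0\<close> by simp
      qed
    qed
    then show ?thesis using M0 by (simp add: n_def)
  qed
qed

lemma normbound:
  fixes H :: "real^'p^'m" and z :: "real^'p" and w :: "real^'m"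
  assumes "\<And>h. z \<bullet> h = w \<bullet> (H *v h)"
  shows "norm z \<le> onorm (\<lambda>v. H *v v) * norm w"
proof -
  have "(norm z)\<^sup>2 = w \<bullet> (H *v z)" using assms[of z] by (simp add: power2_norm_eq_inner)
  also have "\<dots> \<le> norm w * norm (H *v z)" by (rule norm_cauchy_schwarz)
  also have "\<dots> \<le> norm w * (onorm (\<lambda>v. H *v v) * norm z)"
    by (intro mult_left_mono onorm) auto
  finally have *: "norm z * norm z \<le> (onorm (\<lambda>v. H *v v) * norm w) * norm z"
    by (simp add: power2_eq_square algebra_simps)
  show ?thesis
  proof (cases "norm z = 0")
    case True
    have "onorm (\<lambda>v. H *v v) \<ge> 0" by (intro onorm_pos_le) auto
    then show ?thesis using True by simp
  next
    case False
    then show ?thesis using * by (simp add: mult_le_cancel_right)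
  qed
qed

lemma sqexp:
  fixes a d :: "'a::real_inner"
  shows "(norm (a - t *\<^sub>R d))\<^sup>2 = (norm a)\<^sup>2 - 2 * t * (a \<bullet> d) + t\<^sup>2 * (norm d)\<^sup>2"
  unfolding power2_norm_eq_inner by (simp add: inner_diff_left inner_diff_right inner_commute algebra_simps power2_eq_square)

theorem lemma5p1:
  fixes g :: "real^'m \<Rightarrow> real" and Gg :: "real^'m \<Rightarrow> real^'m"
    and f :: "real^'p \<Rightarrow> real" and Gf :: "real^'p \<Rightarrow> real^'p"
    and H :: "real^'p^'m" and L \<alpha> c_H :: real
  assumes f_def: "\<And>x. f x = g (H *v x)"
    and grad_g: "\<And>u. (g has_derivative (\<lambda>h. Gg u \<bullet> h)) (at u)"
    and grad_f: "\<And>x. (f has_derivative (\<lambda>h. Gf x \<bullet> h)) (at x)"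
    and alpha_pos: "\<alpha> > 0"
    and strongly_convex: "\<And>u v. g v \<ge> g u + (v - u) \<bullet> Gg u + \<alpha> / 2 * (norm (v - u))\<^sup>2"
    and smooth: "\<And>u v. norm (Gg u - Gg v) \<le> L * norm (u - v)"
    and nonempty: "{x. \<forall>y. f x \<le> f y} \<noteq> {}"
    and cH_pos: "c_H > 0"
    and hoffman: "\<And>x. (norm (H *v x - H *v closest_point {x. \<forall>y. f x \<le> f y} x))\<^sup>2
                     \<ge> c_H * (norm (x - closest_point {x. \<forall>y. f x \<le> f y} x))\<^sup>2"
  shows "\<forall>x. (let px = closest_point {x. \<forall>y. f x \<le> f y} x;
                  C_H = 1 / (onorm (\<lambda>v. H *v v))\<^sup>2 in
              (Gf x - Gf px) \<bullet> (x - px)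
                \<ge> L * \<alpha> * c_H / (L + \<alpha>) * (norm (x - px))\<^sup>2
                  + C_H / (L + \<alpha>) * (norm (Gf x - Gf px))\<^sup>2)"
proof -
  have Lge: "L \<ge> \<alpha>"
  proof -
    obtain i :: 'm where True by simp
    define e :: "real^'m" where "e = axis i 1"
    have ne: "norm e = 1" by (simp add: e_def)
    have s1: "g e \<ge> g 0 + e \<bullet> Gg 0 + \<alpha> / 2" using strongly_convex[of 0 e] ne by simp
    have s2: "g 0 \<ge> g e + (- e) \<bullet> Gg e + \<alpha> / 2" using strongly_convex[of e 0] ne by simp
    have "\<alpha> \<le> (Gg e - Gg 0) \<bullet> e" using s1 s2 by (simp add: inner_diff_left inner_diff_right inner_commute)
    also have "\<dots> \<le> norm (Gg e - Gg 0) * norm e" by (rule norm_cauchy_schwarz)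
    also have "\<dots> \<le> L" using smooth[of e 0] ne by simp
    finally show ?thesis .
  qed
  have nest: "(norm (Gg u - Gg v))\<^sup>2 + \<alpha> * L * (norm (u - v))\<^sup>2
      \<le> (L + \<alpha>) * ((Gg u - Gg v) \<bullet> (u - v))" for u v
  proof -
    define \<phi> where "\<phi> u = g u - \<alpha> / 2 * (norm u)\<^sup>2" for u
    define G where "G u = Gg u - \<alpha> *\<^sub>R u" for u
    have iden: "\<alpha> / 2 * (norm (v - u))\<^sup>2 - \<alpha> / 2 * (norm v)\<^sup>2
       = - \<alpha> / 2 * (norm u)\<^sup>2 - (\<alpha> *\<^sub>R u) \<bullet> (v - u)" for u v :: "real^'m"
      by (simp add: power2_norm_eq_inner inner_diff_left inner_diff_right inner_commute algebra_simps)
    have C: "\<phi> v \<ge> \<phi> u + G u \<bullet> (v - u)" for u v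
      using strongly_convex[of u v] iden[of v u]
      by (simp add: \<phi>_def G_def inner_diff_left inner_commute algebra_simps)
    have S: "\<phi> v \<le> \<phi> u + G u \<bullet> (v - u) + (L - \<alpha>) / 2 * (norm (v - u))\<^sup>2" for u v
      using descent[of g Gg L v u, OF grad_g smooth] iden[of v u]
      by (simp add: \<phi>_def G_def inner_diff_left inner_commute algebra_simps diff_divide_distrib)
    have co: "(norm (G u - G v))\<^sup>2 \<le> (L - \<alpha>) * ((G u - G v) \<bullet> (u - v))"
      by (rule coco[of \<phi> G "L - \<alpha>", OF C S]) (use Lge in simp)
    define a where "a = (Gg u - Gg v) \<bullet> (u - v)"
    define b where "b = (norm (Gg u - Gg v))\<^sup>2"
    define c where "c = (norm (u - v))\<^sup>2"
    have gd: "G u - G v = (Gg u - Gg v) - \<alpha> *\<^sub>R (u - v)" by (simp add: G_def algebra_simps)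
    have e1: "(norm (G u - G v))\<^sup>2 = b - 2 * \<alpha> * a + \<alpha>\<^sup>2 * c"
      unfolding gd a_def b_def c_def by (rule sqexp)
    have e2: "(G u - G v) \<bullet> (u - v) = a - \<alpha> * c"
      unfolding a_def c_def G_def
      by (simp add: power2_norm_eq_inner inner_diff_left inner_diff_right inner_commute algebra_simps)
    have "b - 2 * \<alpha> * a + \<alpha>\<^sup>2 * c \<le> (L - \<alpha>) * (a - \<alpha> * c)" using co e1 e2 by simp
    then have "b + \<alpha> * L * c \<le> (L + \<alpha>) * a" by (simp add: algebra_simps power2_eq_square)
    then show ?thesis by (simp add: a_def b_def c_def)
  qed
  have Gfe: "Gf x \<bullet> h = Gg (H *v x) \<bullet> (H *v h)" for x h
  proof -
    have lin: "((\<lambda>x. H *v x) has_derivative (\<lambda>h. H *v h)) (at x)"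
      by (rule bounded_linear.has_derivative) auto
    have "((\<lambda>x. g (H *v x)) has_derivative (\<lambda>h. Gg (H *v x) \<bullet> (H *v h))) (at x)"
      using has_derivative_compose[OF lin grad_g] by simp
    moreover have "f = (\<lambda>x. g (H *v x))" using f_def by auto
    ultimately have "(\<lambda>h. Gf x \<bullet> h) = (\<lambda>h. Gg (H *v x) \<bullet> (H *v h))"
      using has_derivative_unique[OF grad_f[of x]] by simp
    then show ?thesis by metis
  qed
  show ?thesis
  proof (intro allI)
    fix x
    define X where "X = {x. \<forall>y. f x \<le> f y}"
    define px where "px = closest_point X x"
    define N where "N = onorm (\<lambda>v. H *v v)"
    define u where "u = H *v x"
    define v where "v = H *v px"
    define A where "A = (Gg u - Gg v) \<bullet> (u - v)"
    define B where "B = (norm (Gg u - Gg v))\<^sup>2"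
    define D where "D = (norm (u - v))\<^sup>2"
    define c where "c = (norm (x - px))\<^sup>2"
    define F where "F = (norm (Gf x - Gf px))\<^sup>2"
    have hA: "(Gf x - Gf px) \<bullet> (x - px) = A"
      by (simp add: A_def u_def v_def inner_diff_left Gfe matrix_vector_mult_diff_distrib inner_diff_right)
    have zh: "(Gf x - Gf px) \<bullet> h = (Gg u - Gg v) \<bullet> (H *v h)" for h
      by (simp add: u_def v_def inner_diff_left Gfe)
    have nb: "norm (Gf x - Gf px) \<le> N * norm (Gg u - Gg v)"
      unfolding N_def by (rule normbound) (rule zh)
    have N0: "N \<ge> 0" unfolding N_def by (intro onorm_pos_le) auto
    have FB: "F \<le> N\<^sup>2 * B" unfolding F_def B_def
      using power_mono[OF nb] by (simp add: power_mult_distrib)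
    have FB2: "1 / N\<^sup>2 * F \<le> B"
    proof (cases "N = 0")
      case True then show ?thesis by (simp add: B_def)
    next
      case False then have "N\<^sup>2 > 0" using N0 by simp
      then show ?thesis using FB by (simp add: field_simps)
    qed
    have hD: "D \<ge> c_H * c" using hoffman[of x]
      by (simp add: D_def c_def u_def v_def px_def X_def)
    have ne: "B + \<alpha> * L * D \<le> (L + \<alpha>) * A" using nest[of u v] by (simp add: A_def B_def D_def)
    have Lp: "L + \<alpha> > 0" using Lge alpha_pos by simp
    have aL: "\<alpha> * L \<ge> 0" using Lge alpha_pos by simp
    have "L * \<alpha> * c_H * c \<le> \<alpha> * L * D" using mult_left_mono[OF hD aL] by (simp add: algebra_simps)
    then have "L * \<alpha> * c_H * c + 1 / N\<^sup>2 * F \<le> (L + \<alpha>) * A" using FB2 ne by linarith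
    then have "(L * \<alpha> * c_H * c + 1 / N\<^sup>2 * F) / (L + \<alpha>) \<le> A"
      using Lp by (simp add: pos_divide_le_eq mult.commute)
    moreover have "(L * \<alpha> * c_H * c + 1 / N\<^sup>2 * F) / (L + \<alpha>)
       = L * \<alpha> * c_H / (L + \<alpha>) * c + 1 / N\<^sup>2 / (L + \<alpha>) * F"
      by (simp add: add_divide_distrib)
    ultimately have "L * \<alpha> * c_H / (L + \<alpha>) * c + 1 / N\<^sup>2 / (L + \<alpha>) * F \<le> A" by simp
    then show "let px = closest_point {x. \<forall>y. f x \<le> f y} x;
                  C_H = 1 / (onorm (\<lambda>v. H *v v))\<^sup>2 in
              (Gf x - Gf px) \<bullet> (x - px)
                \<ge> L * \<alpha> * c_H / (L + \<alpha>) * (norm (x - px))\<^sup>2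
                  + C_H / (L + \<alpha>) * (norm (Gf x - Gf px))\<^sup>2"
      using hA by (simp add: Let_def px_def X_def N_def c_def F_def)
  qed
qed

end
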